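(* Let $n\ge 3$, let $\alpha,\beta>0$, and let $S\in\overline{\mathcal{S}}_n$ be an $\alpha/\beta$-staircase tableau that has the symbol $\alpha$ in box $(n-1,1)$. Then \[\mathbb{P}_{n,\alpha,\beta}\big(S \,\big|\, \alpha_{n-1,1}\big)=\mathbb{P}_{n-2,\alpha,\beta}\big(S[1,3]\big),\] where $\alpha_{n-1,1}$ denotes the event that box $(n-1,1)$ contains $\alpha$. In other words, conditioned on $\alpha_{n-1,1}$, the subtableau $S[1,3]$ of a random $S$ with law $\mathbb{P}_{n,\alpha,\beta}$ is a random tableau in $\overline{\mathcal{S}}_{n-2}$ with law $\mathbb{P}_{n-2,\alpha,\beta}$.
   Context: A staircase tableau of size $n$ has boxes $(i,j)$ with $i,j\ge1$ and $i+j\le n+1$ (shape $(n,n-1,\dots,1)$), rows numbered from the top and columns from the left. An $\alpha/\beta$-staircase tableau of size $n$ is a filling in which each box is empty or contains one of the symbols $\alpha$, $\beta$, such that: all boxes in the same column and above a box containing $\alpha$ are empty; all boxes in the same row and to the left of a box containing $\beta$ are empty; every box on the main diagonal (boxes with $i+j=n+1$) contains a symbol. $\overline{\mathcal{S}}_n$ is the set of these. The weight of $S$ is $wt(S)=\alpha^{N_\alpha}\beta^{N_\beta}$, where $N_\alpha,N_\beta$ are the numbers of $\alpha$'s and $\beta$'s in $S$, and for real parameters $\alpha,\beta>0$, $\mathbb{P}_{n,\alpha,\beta}(S)=wt(S)/Z_n(\alpha,\beta)$ with $Z_n(\alpha,\beta)=\sum_{S\in\overline{\mathcal{S}}_n}wt(S)$.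 For $S\in\overline{\mathcal{S}}_n$ and a box $(i,j)$, $S[i,j]\in\overline{\mathcal{S}}_{n-i-j+2}$ denotes the subtableau obtained by deleting the first $i-1$ rows and the first $j-1$ columns. *)

theory Defs
  imports Complex_Main
begin

datatype cell = Emp | Alpha | Beta

(* a filling: rows i and columns j, both numbered from 1; boxes outside the staircase are Emp *)
type_synonym filling = "nat \<Rightarrow> nat \<Rightarrow> cell"

definition boxes :: "nat \<Rightarrow> (nat \<times> nat) set" where
  "boxes n = {(i, j). 1 \<le> i \<and> 1 \<le> j \<and> i + j \<le> n + 1}"

definition staircase :: "nat \<Rightarrow> filling set" where
  "staircase n = {S.
     (\<forall>i j. S i j \<noteq> Emp \<longrightarrow> (i, j) \<in> boxes n) \<and>
     (\<forall>i j. S i j = Alpha \<longrightarrow> (\<forall>i'. 1 \<le> i' \<and> i' < i \<longrightarrow> S i' j = Emp)) \<and>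
     (\<forall>i j. S i j = Beta \<longrightarrow> (\<forall>j'. 1 \<le> j' \<and> j' < j \<longrightarrow> S i j' = Emp)) \<and>
     (\<forall>i j. 1 \<le> i \<and> 1 \<le> j \<and> i + j = n + 1 \<longrightarrow> S i j \<noteq> Emp)}"

definition N_alpha :: "nat \<Rightarrow> filling \<Rightarrow> nat" where
  "N_alpha n S = card {(i, j) \<in> boxes n. S i j = Alpha}"

definition N_beta :: "nat \<Rightarrow> filling \<Rightarrow> nat" where
  "N_beta n S = card {(i, j) \<in> boxes n. S i j = Beta}"

definition wt :: "nat \<Rightarrow> real \<Rightarrow> real \<Rightarrow> filling \<Rightarrow> real" where
  "wt n a b S = a ^ N_alpha n S * b ^ N_beta n S"

definition Z :: "nat \<Rightarrow> real \<Rightarrow> real \<Rightarrow> real" where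
  "Z n a b = (\<Sum>S\<in>staircase n. wt n a b S)"

definition Prob :: "nat \<Rightarrow> real \<Rightarrow> real \<Rightarrow> filling \<Rightarrow> real" where
  "Prob n a b S = wt n a b S / Z n a b"

definition Prob_event :: "nat \<Rightarrow> real \<Rightarrow> real \<Rightarrow> filling set \<Rightarrow> real" where
  "Prob_event n a b E = (\<Sum>S\<in>staircase n \<inter> E. Prob n a b S)"

definition Prob_cond :: "nat \<Rightarrow> real \<Rightarrow> real \<Rightarrow> filling \<Rightarrow> filling set \<Rightarrow> real" where
  "Prob_cond n a b S E =
     (if S \<in> E then Prob n a b S / Prob_event n a b E else 0)"

definition alpha_at :: "nat \<Rightarrow> nat \<Rightarrow> filling set" where
  "alpha_at i j = {S. S i j = Alpha}"

definition subtab :: "filling \<Rightarrow> nat \<Rightarrow> nat \<Rightarrow> filling" where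
  "subtab S i j = (\<lambda>r c. if 1 \<le> r \<and> 1 \<le> c then S (r + i - 1) (c + j - 1) else Emp)"

end

theory Submission
  imports Defs "HOL-Library.FuncSet"
begin

definition extt :: "nat \<Rightarrow> filling \<Rightarrow> filling" where
  "extt m T = (\<lambda>i j. if j = 1 then (if i = m+1 then Alpha else if i = m+2 then Beta else Emp)
     else if j = 2 then (if i = m+1 then Alpha else Emp)
     else if j \<ge> 3 then T i (j-2) else Emp)"

lemma cell_UNIV: "(UNIV :: cell set) = {Emp, Alpha, Beta}"
  using cell.exhaust by auto

lemma finite_boxes: "finite (boxes n)"
  by (rule finite_subset[of _ "{0..n+1} \<times> {0..n+1}"]) (auto simp: boxes_def)

lemma stair_props:
  assumes "S \<in> staircase n"
  shows "\<And>i j. S i j \<noteq> Emp \<Longrightarrow> (i, j) \<in> boxes n"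
    "\<And>i j i'. S i j = Alpha \<Longrightarrow> 1 \<le> i' \<Longrightarrow> i' < i \<Longrightarrow> S i' j = Emp"
    "\<And>i j j'. S i j = Beta \<Longrightarrow> 1 \<le> j' \<Longrightarrow> j' < j \<Longrightarrow> S i j' = Emp"
    "\<And>i j. 1 \<le> i \<Longrightarrow> 1 \<le> j \<Longrightarrow> i + j = n + 1 \<Longrightarrow> S i j \<noteq> Emp"
proof -
  have h: "(\<forall>i j. S i j \<noteq> Emp \<longrightarrow> (i, j) \<in> boxes n) \<and>
     (\<forall>i j. S i j = Alpha \<longrightarrow> (\<forall>i'. 1 \<le> i' \<and> i' < i \<longrightarrow> S i' j = Emp)) \<and>
     (\<forall>i j. S i j = Beta \<longrightarrow> (\<forall>j'. 1 \<le> j' \<and> j' < j \<longrightarrow> S i j' = Emp)) \<and>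
     (\<forall>i j. 1 \<le> i \<and> 1 \<le> j \<and> i + j = n + 1 \<longrightarrow> S i j \<noteq> Emp)"
    using assms unfolding staircase_def by (rule CollectD)
  show "\<And>i j. S i j \<noteq> Emp \<Longrightarrow> (i, j) \<in> boxes n" using h by blast
  show "\<And>i j i'. S i j = Alpha \<Longrightarrow> 1 \<le> i' \<Longrightarrow> i' < i \<Longrightarrow> S i' j = Emp" using h by blast
  show "\<And>i j j'. S i j = Beta \<Longrightarrow> 1 \<le> j' \<Longrightarrow> j' < j \<Longrightarrow> S i j' = Emp" using h by blast
  show "\<And>i j. 1 \<le> i \<Longrightarrow> 1 \<le> j \<Longrightarrow> i + j = n + 1 \<Longrightarrow> S i j \<noteq> Emp" using h by blast
qed

lemma finite_staircase: "finite (staircase n)"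
proof -
  let ?F = "(\<lambda>f i j. if (i,j)\<in>boxes n then f (i,j) else Emp)"
  have "staircase n \<subseteq> ?F ` (boxes n \<rightarrow>\<^sub>E (UNIV::cell set))"
  proof
    fix S assume S: "S \<in> staircase n"
    let ?g = "restrict (\<lambda>p. S (fst p) (snd p)) (boxes n)"
    have "S = ?F ?g" using stair_props(1)[OF S] by (auto simp: fun_eq_iff)
    moreover have "?g \<in> boxes n \<rightarrow>\<^sub>E UNIV" by auto
    ultimately show "S \<in> ?F ` (boxes n \<rightarrow>\<^sub>E UNIV)" by blast
  qed
  moreover have "finite (boxes n \<rightarrow>\<^sub>E (UNIV::cell set))"
    by (rule finite_PiE) (auto simp: finite_boxes cell_UNIV)
  ultimately show ?thesis using finite_subset by blast
qed

lemma stair_out: "T \<in> staircase m \<Longrightarrow> (i,j) \<notin> boxes m \<Longrightarrow> T i j = Emp"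
  using stair_props(1) by blast

lemma lem1:
  assumes m: "m \<ge> 1" and S: "S \<in> staircase (m+2)" and A: "S (m+1) 1 = Alpha"
  shows "S = extt m (subtab S 1 3)" "subtab S 1 3 \<in> staircase m"
proof -
  have out: "S i j = Emp" if "\<not> (1 \<le> i \<and> 1 \<le> j \<and> i + j \<le> m+3)" for i j
  proof (rule ccontr)
    assume "S i j \<noteq> Emp"
    then have "(i,j) \<in> boxes (m+2)" by (rule stair_props(1)[OF S])
    with that show False by (simp add: boxes_def)
  qed
  have al: "\<And>i j i'. S i j = Alpha \<Longrightarrow> 1 \<le> i' \<Longrightarrow> i' < i \<Longrightarrow> S i' j = Emp"
    by (rule stair_props(2)[OF S])
  have be: "\<And>i j j'. S i j = Beta \<Longrightarrow> 1 \<le> j' \<Longrightarrow> j' < j \<Longrightarrow> S i j' = Emp"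
    by (rule stair_props(3)[OF S])
  have dg: "1 \<le> i \<Longrightarrow> 1 \<le> j \<Longrightarrow> i + j = m+3 \<Longrightarrow> S i j \<noteq> Emp" for i j
    using stair_props(4)[OF S, of i j] by simp
  have c1: "S i 1 = (if i = m+1 then Alpha else if i = m+2 then Beta else Emp)" for i
  proof -
    consider "i = 0" | "1 \<le> i \<and> i < m+1" | "i = m+1" | "i = m+2" | "i > m+2" by linarith
    then show ?thesis
    proof cases
      case 4
      have "S (m+2) 1 \<noteq> Emp" using dg[of "m+2" 1] by simp
      moreover have "S (m+2) 1 \<noteq> Alpha" using al[of "m+2" 1 "m+1"] A by auto
      ultimately show ?thesis using 4 by (cases "S (m+2) 1") auto
    qed (use out al[OF A] A in auto)
  qed
  have A2: "S (m+1) 2 = Alpha"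
  proof -
    have "S (m+1) 2 \<noteq> Emp" using dg[of "m+1" 2] by simp
    moreover have "S (m+1) 2 \<noteq> Beta" using be[of "m+1" 2 1] A by auto
    ultimately show ?thesis by (cases "S (m+1) 2") auto
  qed
  have c2: "S i 2 = (if i = m+1 then Alpha else Emp)" for i
  proof -
    consider "i = 0" | "1 \<le> i \<and> i < m+1" | "i = m+1" | "i > m+1" by linarith
    then show ?thesis by cases (use out al[OF A2] A2 in auto)
  qed
  show "S = extt m (subtab S 1 3)"
  proof (intro ext allI)
    fix i j :: nat
    consider "j = 0" | "j = 1" | "j = 2" | "j \<ge> 3" by linarith
    then show "S i j = extt m (subtab S 1 3) i j"
    proof cases
      case 1 then show ?thesis using out[of i j] by (simp add: extt_def)
    next
      case 2 then show ?thesis using c1[of i] by (simp add: extt_def)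
    next
      case 3 then show ?thesis using c2[of i] by (simp add: extt_def)
    next
      case 4 then show ?thesis using out[of i j] by (auto simp: extt_def subtab_def)
    qed
  qed
  show "subtab S 1 3 \<in> staircase m"
    unfolding staircase_def mem_Collect_eq
  proof (intro conjI allI impI)
    fix i j assume "subtab S 1 3 i j \<noteq> Emp"
    then show "(i, j) \<in> boxes m" using out[of i "j+2"] by (auto simp: subtab_def boxes_def split: if_splits)
  next
    fix i j i' assume "subtab S 1 3 i j = Alpha" "1 \<le> i' \<and> i' < i"
    then show "subtab S 1 3 i' j = Emp" using al[of i "j+2" i'] by (auto simp: subtab_def split: if_splits)
  next
    fix i j j' assume h: "subtab S 1 3 i j = Beta" "1 \<le> j' \<and> j' < j"
    then show "subtab S 1 3 i j' = Emp" using be[of i "j+2" "j'+2"] by (auto simp: subtab_def split: if_splits)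
  next
    fix i j assume "1 \<le> i \<and> 1 \<le> j \<and> i + j = m + 1"
    then show "subtab S 1 3 i j \<noteq> Emp" using dg[of i "j+2"] by (auto simp: subtab_def)
  qed
qed

lemma lem2:
  assumes T: "T \<in> staircase m"
  shows "extt m T \<in> staircase (m+2)" "extt m T (m+1) 1 = Alpha" "subtab (extt m T) 1 3 = T"
proof -
  have out: "T i j = Emp" if "\<not> (1 \<le> i \<and> 1 \<le> j \<and> i + j \<le> m+1)" for i j
  proof (rule ccontr)
    assume "T i j \<noteq> Emp"
    then have "(i,j) \<in> boxes (m)" by (rule stair_props(1)[OF T])
    with that show False by (simp add: boxes_def)
  qed
  have al: "\<And>i j i'. T i j = Alpha \<Longrightarrow> 1 \<le> i' \<Longrightarrow> i' < i \<Longrightarrow> T i' j = Emp"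
    by (rule stair_props(2)[OF T])
  have be: "\<And>i j j'. T i j = Beta \<Longrightarrow> 1 \<le> j' \<Longrightarrow> j' < j \<Longrightarrow> T i j' = Emp"
    by (rule stair_props(3)[OF T])
  have dg: "1 \<le> i \<Longrightarrow> 1 \<le> j \<Longrightarrow> i + j = m+1 \<Longrightarrow> T i j \<noteq> Emp" for i j
    using stair_props(4)[OF T, of i j] by simp
  show "extt m T (m+1) 1 = Alpha" by (simp add: extt_def)
  show "subtab (extt m T) 1 3 = T"
  proof (intro ext)
    fix i j show "subtab (extt m T) 1 3 i j = T i j"
      using out[of i j] by (auto simp: subtab_def extt_def)
  qed
  show "extt m T \<in> staircase (m+2)"
    unfolding staircase_def mem_Collect_eq
  proof (intro conjI allI impI)
    fix i j assume h: "extt m T i j \<noteq> Emp"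
    show "(i,j) \<in> boxes (m+2)"
    proof (cases "j \<ge> 3")
      case True then have "T i (j-2) \<noteq> Emp" using h by (simp add: extt_def)
      then have "(i, j-2) \<in> boxes m" by (rule stair_props(1)[OF T])
      then show ?thesis using True by (auto simp: boxes_def)
    next
      case False then show ?thesis using h by (auto simp: extt_def boxes_def split: if_splits)
    qed
  next
    fix i j i' assume "extt m T i j = Alpha" "1 \<le> i' \<and> i' < i"
    then show "extt m T i' j = Emp" using al[of i "j-2" i'] by (auto simp: extt_def split: if_splits)
  next
    fix i j j' assume h: "extt m T i j = Beta" "1 \<le> j' \<and> j' < j"
    show "extt m T i j' = Emp"
    proof (cases "j \<ge> 3")
      case True
      then have Tb: "T i (j-2) = Beta" using h by (simp add: extt_def)
      have "(i, j-2) \<in> boxes m" using Tb by (intro stair_props(1)[OF T]) simp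
      then have "i \<ge> 1" "i + (j-2) \<le> m+1" by (auto simp: boxes_def)
      then show ?thesis using h True be[OF Tb, of "j'-2"] by (auto simp: extt_def)
    next
      case False then show ?thesis using h by (auto simp: extt_def split: if_splits)
    qed
  next
    fix i j assume h: "1 \<le> i \<and> 1 \<le> j \<and> i + j = m + 2 + 1"
    show "extt m T i j \<noteq> Emp"
    proof (cases "j \<ge> 3")
      case True
      then have "T i (j-2) \<noteq> Emp" using h by (intro dg) auto
      then show ?thesis using True by (simp add: extt_def)
    next
      case False then have "j = 1 \<or> j = 2" using h by auto
      then show ?thesis using h by (auto simp: extt_def)
    qed
  qed
qed

lemma wt_ext:
  assumes T: "T \<in> staircase m"
  shows "wt (m+2) a b (extt m T) = a^2 * b * wt m a b T"
proof -
  have out: "\<And>i j. (i,j) \<notin> boxes m \<Longrightarrow> T i j = Emp" using T stair_out by blast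
  let ?f = "\<lambda>(i::nat,c::nat). (i, c+2)"
  have inj: "inj ?f" by (auto simp: inj_def)
  have fin: "finite {(i, j) \<in> boxes m. T i j = X}" for X
    by (rule finite_subset[OF _ finite_boxes]) auto
  have eqA: "{(i, j) \<in> boxes (m+2). extt m T i j = Alpha} =
     insert (m+1,1) (insert (m+1,2) (?f ` {(i, j) \<in> boxes m. T i j = Alpha}))"
  proof (rule set_eqI, rule iffI)
    fix p assume "p \<in> {(i, j) \<in> boxes (m+2). extt m T i j = Alpha}"
    then obtain i j where p: "p = (i,j)" "(i,j) \<in> boxes (m+2)" "extt m T i j = Alpha" by auto
    show "p \<in> insert (m+1,1) (insert (m+1,2) (?f ` {(i, j) \<in> boxes m. T i j = Alpha}))"
    proof (cases "j \<ge> 3")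
      case True
      then have "T i (j-2) = Alpha" using p by (simp add: extt_def)
      moreover then have "(i, j-2) \<in> boxes m" using out by force
      ultimately have "(i,j-2) \<in> {(i, j) \<in> boxes m. T i j = Alpha}" by auto
      moreover have "p = ?f (i, j-2)" using p True by auto
      ultimately show ?thesis by blast
    next
      case False then show ?thesis using p by (auto simp: extt_def boxes_def split: if_splits)
    qed
  next
    fix p assume "p \<in> insert (m+1,1) (insert (m+1,2) (?f ` {(i, j) \<in> boxes m. T i j = Alpha}))"
    then show "p \<in> {(i, j) \<in> boxes (m+2). extt m T i j = Alpha}"
      by (auto simp: extt_def boxes_def)
  qed
  have eqB: "{(i, j) \<in> boxes (m+2). extt m T i j = Beta} =
     insert (m+2,1) (?f ` {(i, j) \<in> boxes m. T i j = Beta})"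
  proof (rule set_eqI, rule iffI)
    fix p assume "p \<in> {(i, j) \<in> boxes (m+2). extt m T i j = Beta}"
    then obtain i j where p: "p = (i,j)" "(i,j) \<in> boxes (m+2)" "extt m T i j = Beta" by auto
    show "p \<in> insert (m+2,1) (?f ` {(i, j) \<in> boxes m. T i j = Beta})"
    proof (cases "j \<ge> 3")
      case True
      then have "T i (j-2) = Beta" using p by (simp add: extt_def)
      moreover then have "(i, j-2) \<in> boxes m" using out by force
      ultimately have "(i,j-2) \<in> {(i, j) \<in> boxes m. T i j = Beta}" by auto
      moreover have "p = ?f (i, j-2)" using p True by auto
      ultimately show ?thesis by blast
    next
      case False then show ?thesis using p by (auto simp: extt_def boxes_def split: if_splits)
    qed
  next
    fix p assume "p \<in> insert (m+2,1) (?f ` {(i, j) \<in> boxes m. T i j = Beta})"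
    then show "p \<in> {(i, j) \<in> boxes (m+2). extt m T i j = Beta}"
      by (auto simp: extt_def boxes_def)
  qed
  have nb: "\<And>x. (x,0) \<notin> boxes m" by (simp add: boxes_def)
  have cA: "N_alpha (m+2) (extt m T) = N_alpha m T + 2"
    unfolding N_alpha_def eqA using fin[of Alpha] card_image[OF inj_on_subset[OF inj subset_UNIV]]
    using nb by (auto simp: card_insert_if)
  have cB: "N_beta (m+2) (extt m T) = N_beta m T + 1"
    unfolding N_beta_def eqB using fin[of Beta] card_image[OF inj_on_subset[OF inj subset_UNIV]]
    using nb by (auto simp: card_insert_if)
  show ?thesis unfolding wt_def cA cB by (simp add: power_add power2_eq_square)
qed

lemma Z_pos:
  assumes "S \<in> staircase n" "a > 0" "b > 0"
  shows "Z n a b > 0"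
proof -
  have "wt n a b S > 0" using assms by (simp add: wt_def)
  moreover have "\<forall>T\<in>staircase n. wt n a b T \<ge> 0" using assms by (simp add: wt_def)
  ultimately have "wt n a b S \<le> Z n a b" unfolding Z_def
    using member_le_sum[OF assms(1), of "wt n a b"] finite_staircase by auto
  then show ?thesis using \<open>wt n a b S > 0\<close> by linarith
qed

theorem lemma3p1:
  fixes n :: nat and a b :: real and S :: filling
  assumes "n \<ge> 3" and "a > 0" and "b > 0"
    and "S \<in> staircase n" and "S (n - 1) 1 = Alpha"
  shows "Prob_cond n a b S (alpha_at (n - 1) 1) = Prob (n - 2) a b (subtab S 1 3)"
proof -
  define m where "m = n - 2"
  have n: "n = m + 2" and m: "m \<ge> 1" using assms(1) unfolding m_def by arith+
  have S: "S \<in> staircase (m+2)" and A: "S (m+1) 1 = Alpha" using assms n by auto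
  let ?E = "staircase (m+2) \<inter> alpha_at (m+1) 1"
  have bij: "bij_betw (extt m) (staircase m) ?E"
  proof (rule bij_betw_byWitness[where f' = "\<lambda>S. subtab S 1 3"])
    show "\<forall>a\<in>staircase m. subtab (extt m a) 1 3 = a" using lem2 by blast
    show "\<forall>a'\<in>?E. extt m (subtab a' 1 3) = a'" using lem1 m by (auto simp: alpha_at_def)
    show "extt m ` staircase m \<subseteq> ?E" using lem2 by (auto simp: alpha_at_def)
    show "(\<lambda>S. subtab S 1 3) ` ?E \<subseteq> staircase m" using lem1 m by (auto simp: alpha_at_def)
  qed
  have sumE: "(\<Sum>T\<in>?E. wt (m+2) a b T) = a^2 * b * Z m a b"
  proof -
    have "(\<Sum>T\<in>?E. wt (m+2) a b T) = (\<Sum>T\<in>staircase m. wt (m+2) a b (extt m T))"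
      using sum.reindex_bij_betw[OF bij, of "wt (m+2) a b"] by simp
    also have "\<dots> = (\<Sum>T\<in>staircase m. a^2 * b * wt m a b T)"
    proof (rule sum.cong[OF refl])
      fix T assume "T \<in> staircase m" then show "wt (m+2) a b (extt m T) = a^2 * b * wt m a b T" by (rule wt_ext)
    qed
    finally show ?thesis by (simp add: Z_def sum_distrib_left)
  qed
  have Zp: "Z (m+2) a b > 0" using Z_pos[OF S assms(2,3)] .
  have T: "subtab S 1 3 \<in> staircase m" and Se: "S = extt m (subtab S 1 3)" using lem1[OF m S A] by auto
  have Zm: "Z m a b > 0" using Z_pos[OF T assms(2,3)] .
  have wS: "wt (m+2) a b S = a^2 * b * wt m a b (subtab S 1 3)"
    using wt_ext[OF T, of a b] Se by simp
  have PE: "Prob_event (m+2) a b (alpha_at (m+1) 1) = a^2 * b * Z m a b / Z (m+2) a b"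
    unfolding Prob_event_def Prob_def using sumE by (simp add: sum_divide_distrib[symmetric] Int_absorb1 Int_assoc)
  have "Prob_cond (m+2) a b S (alpha_at (m+1) 1) = Prob m a b (subtab S 1 3)"
  proof -
    have "S \<in> alpha_at (m+1) 1" using A by (simp add: alpha_at_def)
    then have "Prob_cond (m+2) a b S (alpha_at (m+1) 1) = (wt (m+2) a b S / Z (m+2) a b) / (a^2 * b * Z m a b / Z (m+2) a b)"
      unfolding Prob_cond_def PE Prob_def by simp
    also have "\<dots> = wt m a b (subtab S 1 3) / Z m a b"
      using wS Zp Zm assms(2,3) by (simp add: field_simps)
    finally show ?thesis by (simp add: Prob_def)
  qed
  then show ?thesis using n by simp
qed

end
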